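(* There is an absolute constant $c>0$ such that for all positive integers $t,N$ with $t\le \frac{N^{2(e^4-1)}}{36}$, $$\inf_{\rho}\ \sup_{R}\ \mathbb{E}\big[W_1(R,\rho(\mathbf S))\big]\ \ge\ c\max\Big\{\frac1t,\ \frac{1}{\sqrt{t\log N}}\Big\},$$ where the supremum is over all probability distributions $R$ on $[0,1]^2$ and the infimum is over all estimators $\rho$ mapping the sample $\mathbf S$ to a probability distribution on $[0,1]^2$.
   Context: Sampling model: given a probability distribution $R$ on $[0,1]^2$ and positive integers $N,t$, draw $(p_i,q_i)\sim R$ independently for $i=1,\dots,N$, and then, independently given these, $X_i\sim \mathrm{Binomial}(t,p_i)$ and $Y_i\sim\mathrm{Binomial}(t,q_i)$. The observed sample is $\mathbf S=\{(X_i,Y_i)\}_{i=1}^N$. $W_1$ denotes the Wasserstein-1 distance on $[0,1]^2$ (Euclidean metric): $W_1(P,Q)=\sup_{f}\int f\,(dP-dQ)$ over all $1$-Lipschitz $f:[0,1]^2\to\mathbb R$. *)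

theory Defs
  imports "HOL-Analysis.Analysis" "HOL-Probability.Probability"
begin

text \<open>The unit square [0,1]^2 (product metric on real \<times> real is Euclidean).\<close>
definition unit_sq :: "(real \<times> real) set" where
  "unit_sq = {0..1} \<times> {0..1}"

definition sq_dist :: "(real \<times> real) measure \<Rightarrow> bool" where
  "sq_dist M \<longleftrightarrow> prob_space M \<and> sets M = sets (borel :: (real \<times> real) measure)
     \<and> emeasure M unit_sq = 1"

text \<open>Wasserstein-1 distance (Kantorovich-Rubinstein dual form).  Every 1-Lipschitz
  function on the square extends to a 1-Lipschitz function on R^2 (McShane),
  so taking the sup over globally 1-Lipschitz functions is the same.\<close>
definition W1 :: "(real \<times> real) measure \<Rightarrow> (real \<times> real) measure \<Rightarrow> real" where
  "W1 P Q = Sup {(\<integral>z. f z \<partial>P) - (\<integral>z. f z \<partial>Q) | f. lipschitz_on 1 UNIV f}"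

text \<open>Binomial(t,p) probability mass at k (written out so it is a polynomial in p).\<close>
definition binom_prob :: "nat \<Rightarrow> real \<Rightarrow> nat \<Rightarrow> real" where
  "binom_prob t p k = real (t choose k) * p ^ k * (1 - p) ^ (t - k)"

text \<open>Probability that a single observation (X_i,Y_i) equals (x,y):
  (p,q) ~ R, then X ~ Bin(t,p), Y ~ Bin(t,q) independently.\<close>
definition obs_prob :: "(real \<times> real) measure \<Rightarrow> nat \<Rightarrow> nat \<Rightarrow> nat \<Rightarrow> real" where
  "obs_prob R t x y = (\<integral>z. binom_prob t (fst z) x * binom_prob t (snd z) y \<partial>R)"

definition sample_prob :: "(real \<times> real) measure \<Rightarrow> nat \<Rightarrow> (nat \<times> nat) list \<Rightarrow> real" where
  "sample_prob R t s = prod_list (map (\<lambda>(x, y). obs_prob R t x y) s)"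

definition samples :: "nat \<Rightarrow> nat \<Rightarrow> (nat \<times> nat) list set" where
  "samples t N = {s. length s = N \<and> set s \<subseteq> {0..t} \<times> {0..t}}"

definition risk :: "nat \<Rightarrow> nat \<Rightarrow> (real \<times> real) measure
                     \<Rightarrow> ((nat \<times> nat) list \<Rightarrow> (real \<times> real) measure) \<Rightarrow> real" where
  "risk t N R \<rho> = (\<Sum>s\<in>samples t N. sample_prob R t s * W1 R (\<rho> s))"

definition estimator :: "((nat \<times> nat) list \<Rightarrow> (real \<times> real) measure) \<Rightarrow> bool" where
  "estimator \<rho> \<longleftrightarrow> (\<forall>s. sq_dist (\<rho> s))"

end

theory Submission
  imports Defs
begin


lemma pascal_alt:
  fixes f :: "nat \<Rightarrow> real"
  shows "(\<Sum>k\<le>Suc n. (-1)^k * real (Suc n choose k) * f k)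
       = (\<Sum>k\<le>n. (-1)^k * real (n choose k) * (f k - f (Suc k)))"
proof -
  have "(\<Sum>k\<le>Suc n. (-1)^k * real (Suc n choose k) * f k)
      = (-1)^0 * real (Suc n choose 0) * f 0 + (\<Sum>k\<le>n. (-1)^(Suc k) * real (Suc n choose Suc k) * f (Suc k))"
    by (subst sum.atMost_Suc_shift) simp
  also have "\<dots> = f 0 + (\<Sum>k\<le>n. (-1)^(Suc k) * real (n choose k) * f (Suc k))
       + (\<Sum>k\<le>n. (-1)^(Suc k) * real (n choose Suc k) * f (Suc k))"
    by (simp add: sum.distrib[symmetric] algebra_simps del: sum.distrib)
  also have "(\<Sum>k\<le>n. (-1)^(Suc k) * real (n choose Suc k) * f (Suc k))
      = (\<Sum>k\<le>Suc n. (-1)^k * real (n choose k) * f k) - f 0"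
    by (subst sum.atMost_Suc_shift[of _ n]) simp
  also have "(\<Sum>k\<le>Suc n. (-1)^k * real (n choose k) * f k) = (\<Sum>k\<le>n. (-1)^k * real (n choose k) * f k)"
    by simp
  finally show ?thesis by (simp add: sum.distrib sum_subtractf sum_negf algebra_simps)
qed

lemma annihilate:
  fixes \<alpha> \<beta> :: real
  shows "m < L \<Longrightarrow> (\<Sum>k\<le>L. (-1)^k * real (L choose k) * (\<alpha> + \<beta> * real k)^m) = 0"
proof (induction L arbitrary: m \<alpha>)
  case 0 then show ?case by simp
next
  case (Suc n)
  have diff: "(\<alpha> + \<beta> * real k)^m - (\<alpha> + \<beta> * real (Suc k))^m
      = - (\<Sum>j<m. real (m choose j) * \<beta>^(m-j) * (\<alpha> + \<beta> * real k)^j)" for k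
  proof -
    have "(\<alpha> + \<beta> * real (Suc k))^m = ((\<alpha> + \<beta> * real k) + \<beta>)^m" by (simp add: algebra_simps)
    also have "\<dots> = (\<Sum>j\<le>m. real (m choose j) * (\<alpha> + \<beta> * real k)^j * \<beta>^(m-j))"
      by (subst binomial_ring) simp
    also have "\<dots> = (\<Sum>j<m. real (m choose j) * (\<alpha> + \<beta> * real k)^j * \<beta>^(m-j)) + (\<alpha> + \<beta> * real k)^m"
      by (simp add: lessThan_Suc_atMost[symmetric])
    finally show ?thesis by (simp add: algebra_simps)
  qed
  have "(\<Sum>k\<le>Suc n. (-1)^k * real (Suc n choose k) * (\<alpha> + \<beta> * real k)^m)
     = (\<Sum>k\<le>n. (-1)^k * real (n choose k) * (- (\<Sum>j<m. real (m choose j) * \<beta>^(m-j) * (\<alpha> + \<beta> * real k)^j)))"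
    by (subst pascal_alt, intro sum.cong refl, subst diff, simp)
  also have "\<dots> = - (\<Sum>j<m. real (m choose j) * \<beta>^(m-j) * (\<Sum>k\<le>n. (-1)^k * real (n choose k) * (\<alpha> + \<beta> * real k)^j))"
    by (simp add: sum_distrib_left sum_negf algebra_simps sum.swap[of _ "{..n}"])
  also have "\<dots> = 0"
    using Suc.IH Suc.prems by (intro iffD2[OF neg_equal_0_iff_equal] sum.neutral) auto
  finally show ?case .
qed



lemma kernel_pt:
  assumes "x \<le> t"
  shows "binom_prob t p x * binom_prob t q x * 2^t / real (t choose x)
       = real (t choose x) * (2*p*q)^x * (2*(1-p)*(1-q))^(t-x)"
proof -
  have c: "real (t choose x) > 0" using assms by simp
  have e: "(2::real)^t = 2^x * 2^(t-x)" using assms by (simp add: power_add[symmetric])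
  have "binom_prob t p x * binom_prob t q x * 2^t / real (t choose x)
     = real (t choose x) * (2^x*p^x*q^x) * (2^(t-x)*(1-p)^(t-x)*(1-q)^(t-x))"
    unfolding binom_prob_def e using c by (simp add: field_simps)
  also have "\<dots> = real (t choose x) * (2*p*q)^x * (2*(1-p)*(1-q))^(t-x)"
    by (simp only: power_mult_distrib)
  finally show ?thesis .
qed

lemma kernel_sum:
  fixes u w :: real
  shows "(\<Sum>x\<le>t. binom_prob t (1/2+u) x * binom_prob t (1/2+w) x * 2^t / real (t choose x))
     = (1 + 4*u*w)^t"
proof -
  have "(\<Sum>x\<le>t. binom_prob t (1/2+u) x * binom_prob t (1/2+w) x * 2^t / real (t choose x))
     = (\<Sum>x\<le>t. real (t choose x) * (2*(1/2+u)*(1/2+w))^x * (2*(1-(1/2+u))*(1-(1/2+w)))^(t-x))"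
    by (intro sum.cong refl kernel_pt) auto
  also have "\<dots> = (2*(1/2+u)*(1/2+w) + 2*(1-(1/2+u))*(1-(1/2+w)))^t"
    by (subst binomial_ring) (simp add: mult.assoc)
  also have "2*(1/2+u)*(1/2+w) + 2*(1-(1/2+u))*(1-(1/2+w)) = 1 + 4*u*w"
    by (simp add: algebra_simps)
  finally show ?thesis .
qed

lemma binom_sum_one: "(\<Sum>x\<le>t. binom_prob t p x) = 1"
  unfolding binom_prob_def using binomial_ring[of p "1-p" t] by (simp add: mult.assoc)



definition uu :: "nat \<Rightarrow> real \<Rightarrow> nat \<Rightarrow> real" where "uu L a k = -a + real k * (2*a/real L)"
definition cc :: "nat \<Rightarrow> nat \<Rightarrow> real" where "cc L k = (-1)^k * real (L choose k)"
definition dd :: "nat \<Rightarrow> nat \<Rightarrow> real \<Rightarrow> nat \<Rightarrow> real" where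
  "dd t L a x = (\<Sum>k\<le>L. cc L k * binom_prob t (1/2 + uu L a k) x)"

lemma S2:
  "(\<Sum>x\<le>t. (dd t L a x)^2 * 2^t / real (t choose x))
     = (\<Sum>k\<le>L. \<Sum>l\<le>L. cc L k * cc L l * (1 + 4 * uu L a k * uu L a l)^t)"
proof -
  have "(\<Sum>x\<le>t. (dd t L a x)^2 * 2^t / real (t choose x))
     = (\<Sum>x\<le>t. \<Sum>k\<le>L. \<Sum>l\<le>L. cc L k * cc L l *
          (binom_prob t (1/2 + uu L a k) x * binom_prob t (1/2 + uu L a l) x * 2^t / real (t choose x)))"
    apply (intro sum.cong refl)
    unfolding dd_def power2_eq_square sum_product
    unfolding sum_distrib_right sum_divide_distrib
    by (simp add: mult_ac)
  also have "\<dots> = (\<Sum>k\<le>L. \<Sum>l\<le>L. cc L k * cc L l *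
          (\<Sum>x\<le>t. binom_prob t (1/2 + uu L a k) x * binom_prob t (1/2 + uu L a l) x * 2^t / real (t choose x)))"
    by (simp add: sum_distrib_left sum.swap[of _ "{..t}"])
  finally show ?thesis by (simp add: kernel_sum)
qed

lemma S3:
  "(\<Sum>k\<le>L. \<Sum>l\<le>L. cc L k * cc L l * (1 + 4 * uu L a k * uu L a l)^t)
    = (\<Sum>m\<le>t. real (t choose m) * 4^m * (\<Sum>k\<le>L. cc L k * uu L a k ^ m)^2)"
proof -
  have b: "(1 + 4 * y1 * y2)^t = (\<Sum>m\<le>t. real (t choose m) * 4^m * (y1^m * y2^m))" for y1 y2 :: real
    using binomial_ring[of "4*y1*y2" "1" "t"] by (simp add: add.commute power_mult_distrib mult_ac)
  show ?thesis
    unfolding b power2_eq_square sum_product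
    by (simp add: sum_distrib_left sum.swap[of _ "{..t}"] mult_ac)
qed

lemma A_zero:
  assumes "m < L"
  shows "(\<Sum>k\<le>L. cc L k * uu L a k ^ m) = 0"
  using annihilate[OF assms, of "-a" "2*a/real L"] unfolding cc_def uu_def
  by (simp add: mult.commute)

lemma uu_bound:
  assumes "k \<le> L" "1 \<le> L" "0 \<le> a"
  shows "\<bar>uu L a k\<bar> \<le> a"
proof -
  have "real k * (2*a/real L) \<le> 2*a"
    using assms by (simp add: field_simps mult_left_mono)
  moreover have "0 \<le> real k * (2*a/real L)" using assms by simp
  ultimately show ?thesis unfolding uu_def by linarith
qed

lemma A_bound:
  assumes "1 \<le> L" "0 \<le> a"
  shows "\<bar>\<Sum>k\<le>L. cc L k * uu L a k ^ m\<bar> \<le> 2^L * a^m"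
proof -
  have "\<bar>\<Sum>k\<le>L. cc L k * uu L a k ^ m\<bar> \<le> (\<Sum>k\<le>L. \<bar>cc L k * uu L a k ^ m\<bar>)"
    by (rule sum_abs)
  also have "\<dots> \<le> (\<Sum>k\<le>L. real (L choose k) * a^m)"
  proof (intro sum_mono)
    fix k assume "k \<in> {..L}"
    then have "\<bar>uu L a k\<bar>^m \<le> a^m" using uu_bound assms by (intro power_mono) auto
    then show "\<bar>cc L k * uu L a k ^ m\<bar> \<le> real (L choose k) * a^m"
      unfolding cc_def by (simp add: abs_mult power_abs mult_left_mono)
  qed
  also have "\<dots> = 2^L * a^m"
    using choose_row_sum[of L] by (simp add: sum_distrib_right[symmetric] flip: of_nat_sum)
  finally show ?thesis .
qed

lemma S4:
  assumes "1 \<le> L" "0 \<le> a"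
  shows "(\<Sum>m\<le>t. real (t choose m) * 4^m * (\<Sum>k\<le>L. cc L k * uu L a k ^ m)^2)
      \<le> 4^L * (\<Sum>m\<in>{L..t}. real (t choose m) * (4*a^2)^m)"
proof -
  have "(\<Sum>m\<le>t. real (t choose m) * 4^m * (\<Sum>k\<le>L. cc L k * uu L a k ^ m)^2)
     \<le> (\<Sum>m\<le>t. if L \<le> m then 4^L * (real (t choose m) * (4*a^2)^m) else 0)"
  proof (intro sum_mono)
    fix m assume "m \<in> {..t}"
    show "real (t choose m) * 4^m * (\<Sum>k\<le>L. cc L k * uu L a k ^ m)^2
       \<le> (if L \<le> m then 4^L * (real (t choose m) * (4*a^2)^m) else 0)"
    proof (cases "L \<le> m")
      case True
      have f4: "((2::real)^L)^2 = 4^L" by (simp add: power2_eq_square power_mult_distrib[symmetric])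
      have am: "(a^2)^m = (a^m)^2" by (simp add: power_mult[symmetric] mult.commute)
      have "(\<Sum>k\<le>L. cc L k * uu L a k ^ m)^2 \<le> (2^L * a^m)^2"
        using A_bound[OF assms, of m] by (metis abs_le_square_iff abs_of_nonneg assms(2) zero_le_mult_iff zero_le_numeral zero_le_power)
      then have "real (t choose m) * 4^m * (\<Sum>k\<le>L. cc L k * uu L a k ^ m)^2
          \<le> real (t choose m) * 4^m * (2^L * a^m)^2"
        by (intro mult_left_mono) auto
      also have "\<dots> = 4^L * (real (t choose m) * (4*a^2)^m)"
        using f4 am by (simp add: power_mult_distrib mult_ac)
      finally show ?thesis using True by simp
    next
      case False then show ?thesis using A_zero[of m L a] by simp
    qed
  qed
  also have "\<dots> = 4^L * (\<Sum>m\<in>{L..t}. real (t choose m) * (4*a^2)^m)"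
  proof -
    have "(\<Sum>m\<le>t. if L \<le> m then 4^L * (real (t choose m) * (4*a^2)^m) else 0)
        = (\<Sum>m\<in>{m\<in>{..t}. L \<le> m}. 4^L * (real (t choose m) * (4*a^2)^m))"
      by (rule sum.inter_filter[symmetric]) simp
    also have "{m\<in>{..t}. L \<le> m} = {L..t}" by auto
    finally show ?thesis by (simp add: sum_distrib_left)
  qed
  finally show ?thesis .
qed

lemma chi_bound:
  assumes "1 \<le> L" "0 \<le> a"
  shows "(\<Sum>x\<le>t. \<bar>dd t L a x\<bar>) \<le> 2^L * sqrt (\<Sum>m\<in>{L..t}. real (t choose m) * (4*a^2)^m)"
proof -
  define E where "E = (\<Sum>m\<in>{L..t}. real (t choose m) * (4*a^2)^m)"
  let ?p = "\<lambda>x. sqrt (real (t choose x) / 2^t)"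
  let ?q = "\<lambda>x. \<bar>dd t L a x\<bar> * sqrt (2^t / real (t choose x))"
  have pq: "?p x * ?q x = \<bar>dd t L a x\<bar>" if "x \<le> t" for x
  proof -
    have "real (t choose x) > 0" using that by simp
    then have "sqrt (real (t choose x) / 2^t) * sqrt (2^t / real (t choose x)) = 1"
      by (simp add: real_sqrt_mult[symmetric])
    then show ?thesis by (simp add: mult_ac)
  qed
  have "(\<Sum>x\<le>t. \<bar>dd t L a x\<bar>) = (\<Sum>x\<le>t. ?p x * ?q x)"
    using pq by (intro sum.cong) auto
  then have "(\<Sum>x\<le>t. \<bar>dd t L a x\<bar>)^2 = (\<Sum>x\<le>t. ?p x * ?q x)^2"
    by simp
  also have "\<dots> \<le> (\<Sum>x\<le>t. (?p x)^2) * (\<Sum>x\<le>t. (?q x)^2)"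
    by (rule Cauchy_Schwarz_ineq_sum)
  also have "(\<Sum>x\<le>t. (?p x)^2) = 1"
  proof -
    have "(\<Sum>x\<le>t. (?p x)^2) = (\<Sum>x\<le>t. real (t choose x)) / 2^t"
      by (simp add: sum_divide_distrib)
    also have "\<dots> = 1" using choose_row_sum[of t] by (simp flip: of_nat_sum)
    finally show ?thesis .
  qed
  also have "(\<Sum>x\<le>t. (?q x)^2) = (\<Sum>x\<le>t. (dd t L a x)^2 * 2^t / real (t choose x))"
    by (simp add: power_mult_distrib)
  also have "\<dots> \<le> 4^L * E"
    unfolding S2 S3 E_def by (rule S4[OF assms])
  finally have sq: "(\<Sum>x\<le>t. \<bar>dd t L a x\<bar>)^2 \<le> 4^L * E" by simp
  have "(\<Sum>x\<le>t. \<bar>dd t L a x\<bar>) \<le> sqrt (4^L * E)"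
    by (rule real_le_rsqrt[OF sq])
  also have "sqrt (4^L * E) = 2^L * sqrt E"
    by (simp add: real_sqrt_mult real_sqrt_power)
  finally show ?thesis unfolding E_def .
qed



lemma unit_sq_borel: "unit_sq \<in> sets (borel :: (real \<times> real) measure)"
  unfolding unit_sq_def by (intro borel_closed closed_Times) auto

lemma sq_AE:
  assumes "sq_dist P" shows "AE z in P. z \<in> unit_sq"
proof -
  interpret prob_space P using assms by (simp add: sq_dist_def)
  have "emeasure P unit_sq = 1" using assms by (simp add: sq_dist_def)
  then have "prob unit_sq = 1" by (simp add: measure_def)
  then show ?thesis by (rule AE_prob_1)
qed

lemma sq_meas:
  assumes "sq_dist P" "continuous_on UNIV g"
  shows "(g :: real \<times> real \<Rightarrow> real) \<in> borel_measurable P"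
proof -
  have "sets P = sets borel" using assms by (simp add: sq_dist_def)
  then show ?thesis using borel_measurable_continuous_onI[OF assms(2)]
    by (subst measurable_cong_sets[OF _ refl]) auto
qed

lemma sq_int:
  assumes "sq_dist P" "continuous_on UNIV g" "AE z in P. \<bar>g z\<bar> \<le> B"
  shows "integrable P (g :: real \<times> real \<Rightarrow> real)"
proof -
  interpret prob_space P using assms by (simp add: sq_dist_def)
  show ?thesis using assms(3) sq_meas[OF assms(1,2)]
    by (intro integrable_const_bound[of _ B]) auto
qed

lemma unit_sq_norm: "z \<in> unit_sq \<Longrightarrow> norm z \<le> 2"
  unfolding unit_sq_def using norm_Pair_le[of "fst z" "snd z"] by auto

lemma lip_int:
  assumes "sq_dist P" "lipschitz_on 1 UNIV g"
  shows "integrable P (g :: real \<times> real \<Rightarrow> real)" "\<bar>(\<integral>z. g z \<partial>P) - g (0,0)\<bar> \<le> 2"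
proof -
  interpret prob_space P using assms by (simp add: sq_dist_def)
  have cont: "continuous_on UNIV g" using lipschitz_on_continuous_on[OF assms(2)] .
  have bd: "\<bar>g z - g (0,0)\<bar> \<le> 2" if "z \<in> unit_sq" for z
  proof -
    have "dist (g z) (g (0,0)) \<le> 1 * dist z (0,0)" by (rule lipschitz_onD[OF assms(2)]) auto
    also have "dist z (0,0) = norm z" by (cases z) (simp add: dist_Pair_Pair norm_Pair)
    finally show ?thesis using unit_sq_norm[OF that] by (simp add: dist_real_def)
  qed
  have ae: "AE z in P. \<bar>g z - g (0,0)\<bar> \<le> 2"
    using sq_AE[OF assms(1)] by eventually_elim (rule bd)
  have ae2: "AE z in P. \<bar>g z\<bar> \<le> 2 + \<bar>g (0,0)\<bar>"
    using ae by eventually_elim linarith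
  show ig: "integrable P g" by (rule sq_int[OF assms(1) cont ae2])
  have ig2: "integrable P (\<lambda>z. g z - g (0,0))" using ig by simp
  have "(\<integral>z. g z - g (0,0) \<partial>P) = (\<integral>z. g z \<partial>P) - g (0,0)"
    using ig by (simp add: prob_space)
  moreover have "(\<integral>z. g z - g (0,0) \<partial>P) \<le> 2"
    using ae by (intro integral_le_const[OF ig2]) (auto elim: eventually_mono)
  moreover have "-2 \<le> (\<integral>z. g z - g (0,0) \<partial>P)"
    using ae by (intro integral_ge_const[OF ig2]) (auto elim: eventually_mono)
  ultimately show "\<bar>(\<integral>z. g z \<partial>P) - g (0,0)\<bar> \<le> 2" by linarith
qed

lemma W1_bdd:
  assumes "sq_dist P" "sq_dist Q"
  shows "bdd_above {(\<integral>z. (f::real\<times>real\<Rightarrow>real) z \<partial>P) - (\<integral>z. f z \<partial>Q) | f. lipschitz_on 1 UNIV f}"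
proof (rule bdd_aboveI)
  fix x assume "x \<in> {(\<integral>z. (f::real\<times>real\<Rightarrow>real) z \<partial>P) - (\<integral>z. f z \<partial>Q) | f. lipschitz_on 1 UNIV f}"
  then obtain f where f: "lipschitz_on 1 UNIV f" "x = (\<integral>z. f z \<partial>P) - (\<integral>z. f z \<partial>Q)" by auto
  show "x \<le> 4" using lip_int(2)[OF assms(1) f(1)] lip_int(2)[OF assms(2) f(1)] f(2) by linarith
qed

lemma W1_ge:
  assumes "sq_dist P" "sq_dist Q" "lipschitz_on 1 UNIV g"
  shows "(\<integral>z. g z \<partial>P) - (\<integral>z. g z \<partial>Q) \<le> W1 P Q"
  unfolding W1_def using assms by (intro cSup_upper[OF _ W1_bdd[OF assms(1,2)]]) blast

lemma lip_zero: "lipschitz_on 1 UNIV (\<lambda>z::real\<times>real. 0::real)"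
  by (rule lipschitz_onI) auto

lemma W1_nonneg:
  assumes "sq_dist P" "sq_dist Q" shows "0 \<le> W1 P Q"
  using W1_ge[OF assms lip_zero] by simp

lemma W1_le:
  assumes "sq_dist P" "sq_dist Q" shows "W1 P Q \<le> 4"
  unfolding W1_def
proof (rule cSup_least)
  show "{(\<integral>z. (f::real\<times>real\<Rightarrow>real) z \<partial>P) - (\<integral>z. f z \<partial>Q) | f. lipschitz_on 1 UNIV f} \<noteq> {}"
    using lip_zero by blast
  fix x assume "x \<in> {(\<integral>z. (f::real\<times>real\<Rightarrow>real) z \<partial>P) - (\<integral>z. f z \<partial>Q) | f. lipschitz_on 1 UNIV f}"
  then obtain f where f: "lipschitz_on 1 UNIV f" "x = (\<integral>z. f z \<partial>P) - (\<integral>z. f z \<partial>Q)" by auto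
  show "x \<le> 4" using lip_int(2)[OF assms(1) f(1)] lip_int(2)[OF assms(2) f(1)] f(2) by linarith
qed



lemma binom_nonneg: "0 \<le> p \<Longrightarrow> p \<le> 1 \<Longrightarrow> 0 \<le> binom_prob t p k"
  unfolding binom_prob_def by simp

lemma binom_le1: assumes "0 \<le> p" "p \<le> 1" shows "binom_prob t p k \<le> 1"
proof (cases "k \<le> t")
  case True
  then have "binom_prob t p k \<le> (\<Sum>x\<le>t. binom_prob t p x)"
    using assms by (intro member_le_sum binom_nonneg) auto
  then show ?thesis by (simp add: binom_sum_one)
next
  case False then show ?thesis by (simp add: binom_prob_def binomial_eq_0)
qed

lemma binom_cont: "continuous_on UNIV (\<lambda>z::real\<times>real. binom_prob t (fst z) x * binom_prob t (snd z) y)"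
  unfolding binom_prob_def by (intro continuous_intros)

lemma obs_bounds:
  assumes "sq_dist R"
  shows "0 \<le> obs_prob R t x y" "obs_prob R t x y \<le> 1"
proof -
  interpret prob_space R using assms by (simp add: sq_dist_def)
  have ae: "AE z in R. 0 \<le> binom_prob t (fst z) x * binom_prob t (snd z) y \<and>
       binom_prob t (fst z) x * binom_prob t (snd z) y \<le> 1"
    using sq_AE[OF assms] proof eventually_elim
    case (elim z)
    then have "0 \<le> fst z" "fst z \<le> 1" "0 \<le> snd z" "snd z \<le> 1" by (auto simp: unit_sq_def)
    then show ?case using binom_nonneg binom_le1
      by (metis mult_le_one mult_nonneg_nonneg)
  qed
  have ig: "integrable R (\<lambda>z. binom_prob t (fst z) x * binom_prob t (snd z) y)"
    using ae by (intro sq_int[OF assms binom_cont, of _ _ _ 1]) (auto elim: eventually_mono)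
  show "0 \<le> obs_prob R t x y" unfolding obs_prob_def
    using ae by (intro integral_ge_const[OF ig, of 0, simplified]) (auto elim: eventually_mono)
  show "obs_prob R t x y \<le> 1" unfolding obs_prob_def
    using ae by (intro integral_le_const[OF ig]) (auto elim: eventually_mono)
qed

lemma prod_list_01: "\<forall>x\<in>set xs. 0 \<le> x \<and> x \<le> (1::real) \<Longrightarrow> 0 \<le> prod_list xs \<and> prod_list xs \<le> 1"
  by (induction xs) (auto intro: mult_le_one)

lemma sp_bounds:
  assumes "sq_dist R"
  shows "0 \<le> sample_prob R t s" "sample_prob R t s \<le> 1"
proof -
  have "\<forall>x\<in>set (map (\<lambda>(x, y). obs_prob R t x y) s). 0 \<le> x \<and> x \<le> 1"
    using obs_bounds[OF assms] by auto
  from prod_list_01[OF this] show "0 \<le> sample_prob R t s" "sample_prob R t s \<le> 1"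
    unfolding sample_prob_def by auto
qed

lemma finite_samples: "finite (samples t N)"
proof -
  have "samples t N = {xs. set xs \<subseteq> {0..t} \<times> {0..t} \<and> length xs = N}"
    unfolding samples_def by auto
  then show ?thesis by (simp add: finite_lists_length_eq)
qed

lemma risk_bound:
  assumes "sq_dist R" "estimator \<rho>"
  shows "risk t N R \<rho> \<le> 4 * real (card (samples t N))"
proof -
  have "risk t N R \<rho> \<le> (\<Sum>s\<in>samples t N. 4)"
    unfolding risk_def
  proof (intro sum_mono)
    fix s
    have "sq_dist (\<rho> s)" using assms(2) by (simp add: estimator_def)
    then have "W1 R (\<rho> s) \<le> 4" "0 \<le> W1 R (\<rho> s)" using W1_le W1_nonneg assms(1) by auto
    then show "sample_prob R t s * W1 R (\<rho> s) \<le> 4"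
      using sp_bounds[OF assms(1), of t s] mult_mono[of "sample_prob R t s" 1 "W1 R (\<rho> s)" 4] by simp
  qed
  then show ?thesis by simp
qed



definition LS :: "'a set \<Rightarrow> nat \<Rightarrow> 'a list set" where
  "LS A n = {s. length s = n \<and> set s \<subseteq> A}"

lemma LS_0: "LS A 0 = {[]}" unfolding LS_def by auto

lemma LS_finite: "finite A \<Longrightarrow> finite (LS A n)"
proof -
  assume "finite A"
  have "LS A n = {xs. set xs \<subseteq> A \<and> length xs = n}" unfolding LS_def by auto
  then show ?thesis using \<open>finite A\<close> by (simp add: finite_lists_length_eq)
qed

lemma LS_Suc: "LS A (Suc n) = (\<lambda>(a,s). a#s) ` (A \<times> LS A n)"
  unfolding LS_def by (auto simp: length_Suc_conv)

lemma LS_Suc_sum: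
  assumes "finite A"
  shows "(\<Sum>s\<in>LS A (Suc n). f s) = (\<Sum>a\<in>A. \<Sum>s\<in>LS A n. f (a#s))"
proof -
  have inj: "inj_on (\<lambda>(a,s). a#s) (A \<times> LS A n)" by (auto simp: inj_on_def)
  have "(\<Sum>s\<in>LS A (Suc n). f s) = (\<Sum>p\<in>A \<times> LS A n. f (fst p # snd p))"
    unfolding LS_Suc by (subst sum.reindex[OF inj]) (auto intro!: sum.cong)
  also have "\<dots> = (\<Sum>a\<in>A. \<Sum>s\<in>LS A n. f (a#s))"
    by (simp add: sum.cartesian_product split_def)
  finally show ?thesis .
qed

lemma prod_list_nonneg_map:
  "(\<And>a. a \<in> A \<Longrightarrow> 0 \<le> (u a :: real)) \<Longrightarrow> set s \<subseteq> A \<Longrightarrow> 0 \<le> prod_list (map u s)"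
  by (induction s) auto

lemma LS_prod_sum:
  assumes "finite A"
  shows "(\<Sum>s\<in>LS A n. prod_list (map u s)) = (\<Sum>a\<in>A. u a :: real)^n"
proof (induction n)
  case 0 then show ?case by (simp add: LS_0)
next
  case (Suc n)
  show ?case using Suc
    by (simp add: LS_Suc_sum[OF assms] sum_distrib_left[symmetric] sum_distrib_right[symmetric])
qed

lemma LS_tv:
  assumes "finite A" "\<And>a. a \<in> A \<Longrightarrow> 0 \<le> (u a :: real)" "\<And>a. a \<in> A \<Longrightarrow> 0 \<le> v a"
    "(\<Sum>a\<in>A. u a) = 1" "(\<Sum>a\<in>A. v a) = 1"
  shows "(\<Sum>s\<in>LS A n. \<bar>prod_list (map u s) - prod_list (map v s)\<bar>) \<le> real n * (\<Sum>a\<in>A. \<bar>u a - v a\<bar>)"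
proof (induction n)
  case 0 then show ?case by (simp add: LS_0)
next
  case (Suc n)
  define \<delta> where "\<delta> = (\<Sum>a\<in>A. \<bar>u a - v a\<bar>)"
  have "(\<Sum>s\<in>LS A (Suc n). \<bar>prod_list (map u s) - prod_list (map v s)\<bar>)
      = (\<Sum>a\<in>A. \<Sum>s\<in>LS A n. \<bar>u a * prod_list (map u s) - v a * prod_list (map v s)\<bar>)"
    by (simp add: LS_Suc_sum[OF assms(1)])
  also have "\<dots> \<le> (\<Sum>a\<in>A. \<Sum>s\<in>LS A n. \<bar>u a - v a\<bar> * prod_list (map u s)
                     + v a * \<bar>prod_list (map u s) - prod_list (map v s)\<bar>)"
  proof (intro sum_mono)
    fix a s assume a: "a \<in> A" and s: "s \<in> LS A n"
    have pu: "0 \<le> prod_list (map u s)" using s assms(2) by (intro prod_list_nonneg_map[of A]) (auto simp: LS_def)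
    have "u a * prod_list (map u s) - v a * prod_list (map v s)
        = (u a - v a) * prod_list (map u s) + v a * (prod_list (map u s) - prod_list (map v s))"
      by (simp add: algebra_simps)
    also have "\<bar>\<dots>\<bar> \<le> \<bar>u a - v a\<bar> * prod_list (map u s) + v a * \<bar>prod_list (map u s) - prod_list (map v s)\<bar>"
      using pu assms(3)[OF a] by (simp add: abs_mult abs_triangle_ineq order_trans[OF abs_triangle_ineq])
    finally show "\<bar>u a * prod_list (map u s) - v a * prod_list (map v s)\<bar>
        \<le> \<bar>u a - v a\<bar> * prod_list (map u s) + v a * \<bar>prod_list (map u s) - prod_list (map v s)\<bar>" .
  qed
  also have "\<dots> = (\<Sum>a\<in>A. \<bar>u a - v a\<bar> * (\<Sum>s\<in>LS A n. prod_list (map u s)))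
       + (\<Sum>a\<in>A. v a * (\<Sum>s\<in>LS A n. \<bar>prod_list (map u s) - prod_list (map v s)\<bar>))"
    by (simp add: sum.distrib sum_distrib_left)
  also have "\<dots> \<le> \<delta> + (\<Sum>a\<in>A. v a * (real n * \<delta>))"
    unfolding LS_prod_sum[OF assms(1)] assms(4) \<delta>_def
    using Suc assms(3) by (auto intro!: sum_mono mult_left_mono simp: \<delta>_def)
  also have "\<dots> = real (Suc n) * \<delta>"
  proof -
    have "(\<Sum>a\<in>A. v a * (real n * \<delta>)) = (\<Sum>a\<in>A. v a) * (real n * \<delta>)"
      by (simp add: sum_distrib_right)
    then show ?thesis using assms(5) by (simp add: algebra_simps)
  qed
  finally show ?case unfolding \<delta>_def .
qed



lemma binom_int:
  assumes "sq_dist R"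
  shows "integrable R (\<lambda>z. binom_prob t (fst z) x * binom_prob t (snd z) y)"
proof -
  have ae: "AE z in R. \<bar>binom_prob t (fst z) x * binom_prob t (snd z) y\<bar> \<le> 1"
    using sq_AE[OF assms] proof eventually_elim
    case (elim z)
    then have "0 \<le> fst z" "fst z \<le> 1" "0 \<le> snd z" "snd z \<le> 1" by (auto simp: unit_sq_def)
    then show ?case using binom_nonneg binom_le1
      by (metis abs_of_nonneg mult_le_one mult_nonneg_nonneg)
  qed
  show ?thesis by (rule sq_int[OF assms binom_cont ae])
qed

lemma obs_sum:
  assumes "sq_dist R"
  shows "(\<Sum>(x,y)\<in>{0..t}\<times>{0..t}. obs_prob R t x y) = 1"
proof -
  interpret prob_space R using assms by (simp add: sq_dist_def)
  have "(\<Sum>(x,y)\<in>{0..t}\<times>{0..t}. obs_prob R t x y)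
      = (\<Sum>p\<in>{0..t}\<times>{0..t}. \<integral>z. binom_prob t (fst z) (fst p) * binom_prob t (snd z) (snd p) \<partial>R)"
    by (simp add: split_def obs_prob_def)
  also have "\<dots> = (\<integral>z. (\<Sum>p\<in>{0..t}\<times>{0..t}. binom_prob t (fst z) (fst p) * binom_prob t (snd z) (snd p)) \<partial>R)"
    by (subst Bochner_Integration.integral_sum) (simp_all add: binom_int[OF assms])
  also have "\<dots> = (\<integral>z. 1 \<partial>R)"
  proof (intro Bochner_Integration.integral_cong refl)
    fix z
    have "(\<Sum>p\<in>{0..t}\<times>{0..t}. binom_prob t (fst z) (fst p) * binom_prob t (snd z) (snd p))
        = (\<Sum>x\<le>t. binom_prob t (fst z) x) * (\<Sum>y\<le>t. binom_prob t (snd z) y)"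
      by (simp add: sum_product sum.cartesian_product atLeast0AtMost split_def)
    then show "(\<Sum>p\<in>{0..t}\<times>{0..t}. binom_prob t (fst z) (fst p) * binom_prob t (snd z) (snd p)) = 1"
      by (simp add: binom_sum_one)
  qed
  finally show ?thesis by (simp add: prob_space)
qed

lemma samples_LS: "samples t N = LS ({0..t}\<times>{0..t}) N"
  unfolding samples_def LS_def by auto

lemma sample_prob_map: "sample_prob R t s = prod_list (map (\<lambda>(x,y). obs_prob R t x y) s)"
  unfolding sample_prob_def ..

lemma min_eq: "min a b = (a + b - \<bar>a - b\<bar>) / (2::real)"
  by (simp add: min_def abs_if)

lemma reduction:
  assumes R1: "sq_dist R1" and R2: "sq_dist R2" and est: "estimator \<rho>"
    and lip: "lipschitz_on 1 UNIV f"
    and h: "0 \<le> (\<integral>z. f z \<partial>R1) - (\<integral>z. f z \<partial>R2)"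
    and tv: "real N * (\<Sum>(x,y)\<in>{0..t}\<times>{0..t}. \<bar>obs_prob R1 t x y - obs_prob R2 t x y\<bar>) \<le> 1"
  shows "((\<integral>z. f z \<partial>R1) - (\<integral>z. f z \<partial>R2)) / 4 \<le> (SUP R\<in>{R. sq_dist R}. risk t N R \<rho>)"
proof -
  define H where "H = (\<integral>z. f z \<partial>R1) - (\<integral>z. f z \<partial>R2)"
  define A where "A = {0..t}\<times>{(0::nat)..t}"
  define P1 where "P1 s = sample_prob R1 t s" for s
  define P2 where "P2 s = sample_prob R2 t s" for s
  have finA: "finite A" unfolding A_def by simp
  have lipm: "lipschitz_on 1 UNIV (\<lambda>z. - f z)" using lip by simp
  have pt: "P1 s * W1 R1 (\<rho> s) + P2 s * W1 R2 (\<rho> s) \<ge> min (P1 s) (P2 s) * H" for s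
  proof -
    have rs: "sq_dist (\<rho> s)" using est by (simp add: estimator_def)
    have w1: "0 \<le> W1 R1 (\<rho> s)" "0 \<le> W1 R2 (\<rho> s)" using W1_nonneg rs R1 R2 by auto
    have "H \<le> W1 R1 (\<rho> s) + W1 R2 (\<rho> s)"
      using W1_ge[OF R1 rs lip] W1_ge[OF R2 rs lipm] unfolding H_def by simp
    moreover have "0 \<le> min (P1 s) (P2 s)"
      using sp_bounds R1 R2 unfolding P1_def P2_def by auto
    ultimately have "min (P1 s) (P2 s) * H \<le> min (P1 s) (P2 s) * (W1 R1 (\<rho> s) + W1 R2 (\<rho> s))"
      by (rule mult_left_mono)
    also have "\<dots> \<le> P1 s * W1 R1 (\<rho> s) + P2 s * W1 R2 (\<rho> s)"
      using w1 by (simp add: distrib_left add_mono mult_right_mono)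
    finally show ?thesis .
  qed
  have sumP1: "(\<Sum>s\<in>samples t N. P1 s) = 1"
    unfolding P1_def samples_LS sample_prob_map
    using LS_prod_sum[where A="{0..t}\<times>{0..t}" and n=N and u="\<lambda>(x,y). obs_prob R1 t x y"] obs_sum[OF R1] by simp
  have sumP2: "(\<Sum>s\<in>samples t N. P2 s) = 1"
    unfolding P2_def samples_LS sample_prob_map
    using LS_prod_sum[where A="{0..t}\<times>{0..t}" and n=N and u="\<lambda>(x,y). obs_prob R2 t x y"] obs_sum[OF R2] by simp
  have tvN: "(\<Sum>s\<in>samples t N. \<bar>P1 s - P2 s\<bar>) \<le> 1"
  proof -
    have "(\<Sum>s\<in>samples t N. \<bar>P1 s - P2 s\<bar>)
        \<le> real N * (\<Sum>a\<in>{0..t}\<times>{0..t}. \<bar>(\<lambda>(x,y). obs_prob R1 t x y) a - (\<lambda>(x,y). obs_prob R2 t x y) a\<bar>)"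
      unfolding P1_def P2_def samples_LS sample_prob_map
      by (rule LS_tv) (auto simp: obs_bounds[OF R1] obs_bounds[OF R2] obs_sum[OF R1] obs_sum[OF R2])
    also have "\<dots> \<le> 1" using tv by (simp add: split_def)
    finally show ?thesis .
  qed
  have summin: "(\<Sum>s\<in>samples t N. min (P1 s) (P2 s)) \<ge> 1/2"
  proof -
    have "(\<Sum>s\<in>samples t N. min (P1 s) (P2 s))
        = ((\<Sum>s\<in>samples t N. P1 s) + (\<Sum>s\<in>samples t N. P2 s) - (\<Sum>s\<in>samples t N. \<bar>P1 s - P2 s\<bar>)) / 2"
      by (simp add: min_eq sum_divide_distrib[symmetric] sum.distrib sum_subtractf)
    then show ?thesis using sumP1 sumP2 tvN by simp
  qed
  have "risk t N R1 \<rho> + risk t N R2 \<rho> \<ge> (\<Sum>s\<in>samples t N. min (P1 s) (P2 s)) * H"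
    unfolding risk_def P1_def[symmetric] P2_def[symmetric] sum.distrib[symmetric] sum_distrib_right
    by (intro sum_mono pt)
  moreover have "(\<Sum>s\<in>samples t N. min (P1 s) (P2 s)) * H \<ge> H / 2"
    using mult_right_mono[OF summin h] unfolding H_def[symmetric] by simp
  ultimately have "max (risk t N R1 \<rho>) (risk t N R2 \<rho>) \<ge> H / 4" by linarith
  moreover have bdd: "bdd_above ((\<lambda>R. risk t N R \<rho>) ` {R. sq_dist R})"
    using risk_bound[OF _ est] by (intro bdd_aboveI[of _ "4 * real (card (samples t N))"]) auto
  have "risk t N R1 \<rho> \<le> (SUP R\<in>{R. sq_dist R}. risk t N R \<rho>)"
    using R1 by (intro cSUP_upper[OF _ bdd]) auto
  moreover have "risk t N R2 \<rho> \<le> (SUP R\<in>{R. sq_dist R}. risk t N R \<rho>)"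
    using R2 by (intro cSUP_upper[OF _ bdd]) auto
  ultimately show ?thesis unfolding H_def by linarith
qed



definition pp :: "nat \<Rightarrow> real \<Rightarrow> nat \<Rightarrow> real \<times> real" where
  "pp L a k = (1/2 + uu L a k, 0)"

definition RR :: "nat \<Rightarrow> real \<Rightarrow> (nat \<Rightarrow> nat) \<Rightarrow> (real \<times> real) measure" where
  "RR L a \<phi> = distr (measure_pmf (binomial_pmf (L - 1) (1/2))) borel (\<lambda>b. pp L a (\<phi> b))"

definition evup :: "nat \<Rightarrow> nat" where "evup b = (if even b then b else Suc b)"
definition odup :: "nat \<Rightarrow> nat" where "odup b = (if odd b then b else Suc b)"

lemma set_pmf_B: "set_pmf (binomial_pmf n (1/2)) = {..n}"
  by simp

lemma pp_sq:
  assumes "k \<le> L" "1 \<le> L" "0 \<le> a" "a \<le> 1/2"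
  shows "pp L a k \<in> unit_sq"
  using uu_bound[OF assms(1,2,3)] assms(4) unfolding pp_def unit_sq_def by auto

lemma RR_sq:
  assumes "\<And>b. b \<le> L - 1 \<Longrightarrow> \<phi> b \<le> L" "1 \<le> L" "0 \<le> a" "a \<le> 1/2"
  shows "sq_dist (RR L a \<phi>)"
proof -
  let ?B = "binomial_pmf (L - 1) (1/2)"
  have m: "(\<lambda>b. pp L a (\<phi> b)) \<in> measurable (measure_pmf ?B) borel" by simp
  have ps: "prob_space (RR L a \<phi>)"
    unfolding RR_def by (rule prob_space.prob_space_distr[OF prob_space_measure_pmf m])
  have "emeasure (RR L a \<phi>) unit_sq = emeasure (measure_pmf ?B) ((\<lambda>b. pp L a (\<phi> b)) -` unit_sq \<inter> space (measure_pmf ?B))"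
    unfolding RR_def by (rule emeasure_distr[OF m unit_sq_borel])
  also have "\<dots> = 1"
  proof (rule measure_pmf.emeasure_eq_1_AE)
    show "(\<lambda>b. pp L a (\<phi> b)) -` unit_sq \<inter> space (measure_pmf ?B) \<in> sets (measure_pmf ?B)" by simp
    show "AE x in measure_pmf ?B. x \<in> (\<lambda>b. pp L a (\<phi> b)) -` unit_sq \<inter> space (measure_pmf ?B)"
      unfolding AE_measure_pmf_iff using assms pp_sq by auto
  qed
  finally show ?thesis using ps unfolding sq_dist_def RR_def by simp
qed

lemma RR_integral:
  assumes "g \<in> borel_measurable borel"
  shows "(\<integral>z. g z \<partial>RR L a \<phi>) = (\<Sum>b\<le>L-1. g (pp L a (\<phi> b)) * (real (L - 1 choose b) / 2^(L-1)))"
proof -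
  let ?B = "binomial_pmf (L - 1) (1/2)"
  have m: "(\<lambda>b. pp L a (\<phi> b)) \<in> measurable (measure_pmf ?B) borel" by simp
  have "(\<integral>z. g z \<partial>RR L a \<phi>) = (\<integral>b. g (pp L a (\<phi> b)) \<partial>measure_pmf ?B)"
    unfolding RR_def by (subst integral_distr[OF m assms]) (simp add: comp_def)
  also have "\<dots> = (\<Sum>b\<le>L-1. g (pp L a (\<phi> b)) * pmf ?B b)"
    by (rule integral_measure_pmf_real) auto
  also have "\<dots> = (\<Sum>b\<le>L-1. g (pp L a (\<phi> b)) * (real (L - 1 choose b) / 2^(L-1)))"
  proof (intro sum.cong refl)
    fix b assume "b \<in> {..L-1}"
    then have "(1/2::real)^b * (1 - 1/2)^(L - 1 - b) = 1 / 2^(L-1)"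
      by (simp add: power_add[symmetric] power_one_over)
    then show "g (pp L a (\<phi> b)) * pmf ?B b = g (pp L a (\<phi> b)) * (real (L - 1 choose b) / 2^(L-1))"
      by (simp add: mult.assoc)
  qed
  finally show ?thesis .
qed

lemma binom_zero: "binom_prob t 0 y = (if y = 0 then 1 else 0)"
  unfolding binom_prob_def by simp

lemma obs_RR:
  "obs_prob (RR L a \<phi>) t x y = (if y = 0 then (\<Sum>b\<le>L-1. binom_prob t (1/2 + uu L a (\<phi> b)) x * (real (L - 1 choose b) / 2^(L-1))) else 0)"
proof -
  have m: "(\<lambda>z::real\<times>real. binom_prob t (fst z) x * binom_prob t (snd z) y) \<in> borel_measurable borel"
    by (rule borel_measurable_continuous_onI[OF binom_cont])
  show ?thesis unfolding obs_prob_def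
    by (subst RR_integral[OF m]) (auto simp: pp_def binom_zero)
qed



lemma evod_diff:
  fixes g :: "nat \<Rightarrow> real"
  shows "g (evup b) - g (odup b) = (-1)^b * (g b - g (Suc b))"
  unfolding evup_def odup_def by (cases "even b") auto

lemma D_eq:
  fixes g :: "nat \<Rightarrow> real"
  shows "(\<Sum>b\<le>n. g (evup b) * (real (n choose b) / 2^n)) - (\<Sum>b\<le>n. g (odup b) * (real (n choose b) / 2^n))
     = (\<Sum>k\<le>Suc n. cc (Suc n) k * g k) / 2^n"
proof -
  have "(\<Sum>b\<le>n. g (evup b) * (real (n choose b) / 2^n)) - (\<Sum>b\<le>n. g (odup b) * (real (n choose b) / 2^n))
      = (\<Sum>b\<le>n. (-1)^b * real (n choose b) * (g b - g (Suc b))) / 2^n"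
    unfolding sum_subtractf[symmetric] sum_divide_distrib
  proof (intro sum.cong refl)
    fix b
    have e: "g (evup b) * (real (n choose b) / 2^n) - g (odup b) * (real (n choose b) / 2^n)
       = ((-1)^b * (g b - g (Suc b))) * (real (n choose b) / 2^n)"
      by (simp only: evod_diff[symmetric] left_diff_distrib)
    show "g (evup b) * (real (n choose b) / 2^n) - g (odup b) * (real (n choose b) / 2^n)
       = (-1)^b * real (n choose b) * (g b - g (Suc b)) / 2^n"
      unfolding e by simp
  qed
  also have "\<dots> = (\<Sum>k\<le>Suc n. cc (Suc n) k * g k) / 2^n"
    unfolding cc_def by (subst pascal_alt) simp
  finally show ?thesis .
qed

lemma tv_RR:
  assumes "L = Suc n"
  shows "(\<Sum>(x,y)\<in>{0..t}\<times>{0..t}. \<bar>obs_prob (RR L a evup) t x y - obs_prob (RR L a odup) t x y\<bar>)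
       = (\<Sum>x\<le>t. \<bar>dd t L a x\<bar>) / 2^n"
proof -
  have "(\<Sum>(x,y)\<in>{0..t}\<times>{0..t}. \<bar>obs_prob (RR L a evup) t x y - obs_prob (RR L a odup) t x y\<bar>)
      = (\<Sum>x\<in>{0..t}. \<Sum>y\<in>{0..t}. \<bar>obs_prob (RR L a evup) t x y - obs_prob (RR L a odup) t x y\<bar>)"
    by (simp add: sum.cartesian_product)
  also have "\<dots> = (\<Sum>x\<in>{0..t}. \<bar>obs_prob (RR L a evup) t x 0 - obs_prob (RR L a odup) t x 0\<bar>)"
  proof (intro sum.cong refl)
    fix x
    have "(\<Sum>y\<in>{0..t}. \<bar>obs_prob (RR L a evup) t x y - obs_prob (RR L a odup) t x y\<bar>)
        = (\<Sum>y\<in>{0..t}. if y = 0 then \<bar>obs_prob (RR L a evup) t x 0 - obs_prob (RR L a odup) t x 0\<bar> else 0)"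
      by (intro sum.cong refl) (simp add: obs_RR)
    also have "\<dots> = \<bar>obs_prob (RR L a evup) t x 0 - obs_prob (RR L a odup) t x 0\<bar>"
      by (simp add: sum.delta)
    finally show "(\<Sum>y\<in>{0..t}. \<bar>obs_prob (RR L a evup) t x y - obs_prob (RR L a odup) t x y\<bar>)
        = \<bar>obs_prob (RR L a evup) t x 0 - obs_prob (RR L a odup) t x 0\<bar>" .
  qed
  also have "\<dots> = (\<Sum>x\<le>t. \<bar>dd t L a x\<bar> / 2^n)"
  proof (intro sum.cong)
    show "{0..t} = {..t}" by auto
    fix x
    show "\<bar>obs_prob (RR L a evup) t x 0 - obs_prob (RR L a odup) t x 0\<bar> = \<bar>dd t L a x\<bar> / 2^n"
      unfolding obs_RR assms dd_def
      using D_eq[of "\<lambda>k. binom_prob t (1/2 + uu (Suc n) a k) x" n] by simp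
  qed
  also have "\<dots> = (\<Sum>x\<le>t. \<bar>dd t L a x\<bar>) / 2^n" by (simp add: sum_divide_distrib)
  finally show ?thesis .
qed

definition SS :: "nat \<Rightarrow> real \<Rightarrow> (real \<times> real) set" where
  "SS L a = pp L a ` {k. k \<le> L \<and> odd k}"

lemma lip_infdist: "lipschitz_on 1 UNIV (\<lambda>z::real\<times>real. infdist z S)"
  by (rule lipschitz_onI) (auto simp: dist_real_def infdist_triangle_abs)

lemma dist_pp:
  assumes "1 \<le> L" "0 \<le> a"
  shows "dist (pp L a k) (pp L a j) = \<bar>real k - real j\<bar> * (2*a/real L)"
proof -
  have "dist (pp L a k) (pp L a j) = \<bar>uu L a k - uu L a j\<bar>"
    unfolding pp_def by (simp add: dist_Pair_Pair dist_real_def)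
  also have "uu L a k - uu L a j = (real k - real j) * (2*a/real L)"
    unfolding uu_def by (simp add: algebra_simps diff_divide_distrib)
  finally show ?thesis using assms by (simp add: abs_mult)
qed

lemma f_even:
  assumes "1 \<le> L" "0 \<le> a" "even k"
  shows "2*a/real L \<le> infdist (pp L a k) (SS L a)"
proof -
  have ne: "SS L a \<noteq> {}" unfolding SS_def using assms(1) by (auto intro!: exI[of _ 1])
  have "2*a/real L \<le> (INF s\<in>SS L a. dist (pp L a k) s)"
  proof (rule cINF_greatest[OF ne])
    fix s assume "s \<in> SS L a"
    then obtain j where j: "odd j" "s = pp L a j" unfolding SS_def by auto
    have "k \<noteq> j" using j assms(3) by auto
    then have "1 \<le> \<bar>real k - real j\<bar>" by linarith
    moreover have "0 \<le> 2*a/real L" using assms by simp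
    ultimately have "2*a/real L \<le> \<bar>real k - real j\<bar> * (2*a/real L)"
      by (metis mult_le_cancel_right1 order.strict_iff_not)
    then show "2*a/real L \<le> dist (pp L a k) s" using j dist_pp[OF assms(1,2)] by simp
  qed
  then show ?thesis using infdist_notempty[OF ne] by simp
qed

lemma f_odd:
  assumes "odd k" "k \<le> L"
  shows "infdist (pp L a k) (SS L a) = 0"
  using assms unfolding SS_def by (intro infdist_zero) auto



lemma key:
  assumes L: "1 \<le> L" and a: "0 < a" "a \<le> 1/2" and est: "estimator \<rho>"
    and E: "2 * real N * sqrt (\<Sum>m\<in>{L..t}. real (t choose m) * (4*a^2)^m) \<le> 1"
  shows "a / (2 * real L) \<le> (SUP R\<in>{R. sq_dist R}. risk t N R \<rho>)"
proof -
  obtain n where n: "L = Suc n" using L by (cases L) auto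
  define f where "f = (\<lambda>z::real\<times>real. infdist z (SS L a))"
  have lip: "lipschitz_on 1 UNIV f" unfolding f_def by (rule lip_infdist)
  have fm: "f \<in> borel_measurable borel"
    by (rule borel_measurable_continuous_onI[OF lipschitz_on_continuous_on[OF lip]])
  have R1: "sq_dist (RR L a evup)" using a L by (intro RR_sq) (auto simp: evup_def n)
  have R2: "sq_dist (RR L a odup)" using a L by (intro RR_sq) (auto simp: odup_def n)
  have wsum: "(\<Sum>b\<le>n. real (n choose b) / 2^n) = 1"
    using choose_row_sum[of n] by (simp add: sum_divide_distrib[symmetric] flip: of_nat_sum)
  have i1: "2*a/real L \<le> (\<integral>z. f z \<partial>RR L a evup)"
  proof -
    have "(\<Sum>b\<le>n. (2*a/real L) * (real (n choose b) / 2^n)) \<le> (\<Sum>b\<le>n. f (pp L a (evup b)) * (real (n choose b) / 2^n))"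
      unfolding f_def using L a by (intro sum_mono mult_right_mono f_even) (auto simp: evup_def)
    moreover have "(\<Sum>b\<le>n. (2*a/real L) * (real (n choose b) / 2^n)) = 2*a/real L"
      using wsum by (simp only: sum_distrib_left[symmetric])
    ultimately show ?thesis using RR_integral[OF fm, of L a evup] by (simp add: n)
  qed
  have i2: "(\<integral>z. f z \<partial>RR L a odup) = 0"
  proof -
    have "(\<integral>z. f z \<partial>RR L a odup) = (\<Sum>b\<le>n. f (pp L a (odup b)) * (real (n choose b) / 2^n))"
      using RR_integral[OF fm, of L a odup] by (simp add: n)
    also have "\<dots> = 0" unfolding f_def
      by (intro sum.neutral ballI) (auto simp: n odup_def intro!: f_odd)
    finally show ?thesis .
  qed
  have tv: "real N * (\<Sum>(x,y)\<in>{0..t}\<times>{0..t}. \<bar>obs_prob (RR L a evup) t x y - obs_prob (RR L a odup) t x y\<bar>) \<le> 1"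
  proof -
    have "(\<Sum>(x,y)\<in>{0..t}\<times>{0..t}. \<bar>obs_prob (RR L a evup) t x y - obs_prob (RR L a odup) t x y\<bar>)
        = (\<Sum>x\<le>t. \<bar>dd t L a x\<bar>) / 2^n" by (rule tv_RR[OF n])
    also have "\<dots> \<le> 2^L * sqrt (\<Sum>m\<in>{L..t}. real (t choose m) * (4*a^2)^m) / 2^n"
      using chi_bound[OF L, of a t] a by (intro divide_right_mono) auto
    also have "\<dots> = 2 * sqrt (\<Sum>m\<in>{L..t}. real (t choose m) * (4*a^2)^m)"
      by (simp add: n)
    finally have "(\<Sum>(x,y)\<in>{0..t}\<times>{0..t}. \<bar>obs_prob (RR L a evup) t x y - obs_prob (RR L a odup) t x y\<bar>)
        \<le> 2 * sqrt (\<Sum>m\<in>{L..t}. real (t choose m) * (4*a^2)^m)" .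
    then have "real N * (\<Sum>(x,y)\<in>{0..t}\<times>{0..t}. \<bar>obs_prob (RR L a evup) t x y - obs_prob (RR L a odup) t x y\<bar>)
        \<le> real N * (2 * sqrt (\<Sum>m\<in>{L..t}. real (t choose m) * (4*a^2)^m))"
      by (rule mult_left_mono) simp
    then show ?thesis using E by (simp add: mult_ac)
  qed
  have h0: "0 \<le> (\<integral>z. f z \<partial>RR L a evup) - (\<integral>z. f z \<partial>RR L a odup)"
  proof -
    have "0 \<le> 2*a/real L" using a by simp
    then show ?thesis using i1 i2 by linarith
  qed
  have "((\<integral>z. f z \<partial>RR L a evup) - (\<integral>z. f z \<partial>RR L a odup)) / 4 \<le> (SUP R\<in>{R. sq_dist R}. risk t N R \<rho>)"
    by (rule reduction[OF R1 R2 est lip h0 tv])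
  moreover have "a / (2 * real L) \<le> ((\<integral>z. f z \<partial>RR L a evup) - (\<integral>z. f z \<partial>RR L a odup)) / 4"
    using i1 i2 L by (simp add: field_simps)
  ultimately show ?thesis by linarith
qed



lemma chernoff:
  fixes y lam :: real
  assumes "0 \<le> y" "1 \<le> lam"
  shows "(\<Sum>m\<in>{L..t}. real (t choose m) * y^m) \<le> exp (real t * lam * y) / lam^L"
proof -
  have "(\<Sum>m\<in>{L..t}. real (t choose m) * y^m) \<le> (\<Sum>m\<in>{L..t}. real (t choose m) * (lam*y)^m / lam^L)"
  proof (intro sum_mono)
    fix m assume "m \<in> {L..t}"
    then have "lam^L \<le> lam^m" using assms by (intro power_increasing) auto
    then have "y^m * lam^L \<le> y^m * lam^m" using assms by (intro mult_left_mono) auto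
    then have "y^m \<le> (lam*y)^m / lam^L" using assms by (simp add: field_simps power_mult_distrib)
    then show "real (t choose m) * y^m \<le> real (t choose m) * (lam*y)^m / lam^L"
      by (metis mult_left_mono of_nat_0_le_iff times_divide_eq_right)
  qed
  also have "\<dots> \<le> (\<Sum>m\<le>t. real (t choose m) * (lam*y)^m / lam^L)"
    using assms by (intro sum_mono2) auto
  also have "\<dots> = (1 + lam*y)^t / lam^L"
    using binomial_ring[of "lam*y" 1 t] by (simp add: sum_divide_distrib add.commute)
  also have "\<dots> \<le> exp (lam*y)^t / lam^L"
    using assms by (intro divide_right_mono power_mono) (auto simp: exp_ge_add_one_self add.commute)
  also have "exp (lam*y)^t = exp (real t * lam * y)"
    by (simp add: exp_of_nat_mult[symmetric] mult.assoc)
  finally show ?thesis .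
qed

lemma exp2_e: "exp (2::real) = exp 1 * exp 1" using exp_add[of "1::real" 1] by simp
lemma exp1_ge2: "2 \<le> exp (1::real)" using exp_ge_add_one_self[of 1] by simp
lemma exp2_x2: "2 * 2 \<le> exp (1::real) * exp 1" using exp1_ge2 by (intro mult_mono) auto
lemma exp2_x4: "exp (1::real) * exp 1 \<le> 3 * 3" using exp_le by (intro mult_mono) auto
lemma exp2_bounds: "4 \<le> exp (2::real)" "exp (2::real) \<le> 9"
  using exp2_x2 exp2_x4 unfolding exp2_e by simp_all



lemma case_small:
  assumes t: "0 < t" and est: "estimator \<rho>"
  shows "1 / (8 * real t) \<le> (SUP R\<in>{R. sq_dist R}. risk t N R \<rho>)"
proof -
  have E0: "(\<Sum>m\<in>{Suc t..t}. real (t choose m) * (4*(1/2::real)^2)^m) = 0" by simp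
  have "(1/2) / (2 * real (Suc t)) \<le> (SUP R\<in>{R. sq_dist R}. risk t N R \<rho>)"
    by (rule key[OF _ _ _ est]) (simp_all add: E0)
  moreover have "1 / (8 * real t) \<le> (1/2) / (2 * real (Suc t))"
    using t by (simp add: field_simps)
  ultimately show ?thesis by linarith
qed

lemma case_large:
  assumes t: "0 < t" and N: "2 \<le> N" and est: "estimator \<rho>"
    and big: "4 * ln (real N) < real t"
  shows "1 / (36 * sqrt (real t * ln (real N))) \<le> (SUP R\<in>{R. sq_dist R}. risk t N R \<rho>)"
proof -
  define l where "l = ln (real N)"
  have "ln 2 \<le> ln (real N)" using N by (subst ln_le_cancel_iff) auto
  then have l23: "2/3 \<le> l" unfolding l_def using ln2_ge_two_thirds by linarith
  define L where "L = nat \<lceil>2*l\<rceil> + 2"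
  have Lge: "2*l + 2 \<le> real L" and Lle: "real L \<le> 2*l + 3"
    using l23 unfolding L_def by linarith+
  have L1: "1 \<le> L" unfolding L_def by simp
  define a where "a = sqrt (real L / (4 * exp 2 * real t))"
  have a2: "a^2 = real L / (4 * exp 2 * real t)" unfolding a_def using t by simp
  have apos: "0 < a" unfolding a_def using t L1 by simp
  have t1: "1 \<le> real t" using t by simp
  have "real L \<le> 4 * real t" using Lle big t1 unfolding l_def[symmetric] by linarith
  also have "4 * real t \<le> exp 2 * real t" using exp2_bounds(1) by (rule mult_right_mono) simp
  finally have "real L \<le> exp 2 * real t" .
  then have "a^2 \<le> (1/2)^2" unfolding a2 using t
    by (simp add: field_simps)
  then have ahalf: "a \<le> 1/2" by (rule power2_le_imp_le) simp
  define E where "E = (\<Sum>m\<in>{L..t}. real (t choose m) * (4*a^2)^m)"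
  have E0: "0 \<le> E" unfolding E_def by (intro sum_nonneg) auto
  have "E \<le> exp (real t * exp 2 * (4*a^2)) / exp 2 ^ L"
    unfolding E_def by (rule chernoff) (use exp2_bounds(1) in auto)
  also have "real t * exp 2 * (4*a^2) = real L" unfolding a2 using t by (simp add: field_simps)
  also have "exp 2 ^ L = exp (2 * real L)" by (simp add: exp_of_nat_mult[symmetric] mult.commute)
  also have "exp (real L) / exp (2 * real L) = exp (- real L)" by (simp add: exp_diff[symmetric])
  finally have Eb: "E \<le> exp (- real L)" .
  have "ln (4 * real N ^ 2) = ln 4 + 2 * l"
    unfolding l_def using N by (simp add: ln_mult ln_realpow)
  also have "ln 4 \<le> (2::real)"
  proof -
    have "ln 4 \<le> ln (exp (2::real))" using exp2_bounds(1) by (subst ln_le_cancel_iff) auto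
    then show ?thesis by simp
  qed
  then have "ln 4 + 2 * l \<le> real L" using Lge by linarith
  finally have "exp (ln (4 * real N ^ 2)) \<le> exp (real L)" by simp
  then have "4 * real N ^ 2 \<le> exp (real L)" using N by simp
  then have "4 * real N ^ 2 * exp (- real L) \<le> 1"
    by (simp add: exp_minus field_simps)
  then have "4 * real N ^ 2 * E \<le> 1"
    using mult_left_mono[OF Eb, of "4 * real N ^ 2"] by simp
  then have "(2 * real N * sqrt E)^2 \<le> 1^2"
    using E0 by (simp add: power_mult_distrib)
  then have Ec: "2 * real N * sqrt E \<le> 1"
    by (rule power2_le_imp_le) simp
  have res: "a / (2 * real L) \<le> (SUP R\<in>{R. sq_dist R}. risk t N R \<rho>)"
    by (rule key[OF L1 apos ahalf est]) (use Ec in \<open>simp add: E_def\<close>)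
  have lpos: "0 < l" using l23 by simp
  have "(1 / (36 * sqrt (real t * l)))^2 = 1 / (1296 * (real t * l))"
    using t lpos by (simp add: power_mult_distrib power_divide)
  also have "\<dots> \<le> 1 / (16 * exp 2 * real t * real L)"
  proof -
    have "16 * exp 2 * real t * real L \<le> 16 * 9 * real t * (7 * l)"
      using exp2_bounds(2) Lle l23 t
      by (intro mult_mono) auto
    also have "\<dots> \<le> 1296 * (real t * l)" using mult_nonneg_nonneg[of l "real t"] lpos by simp
    finally show ?thesis using t L1 lpos exp2_bounds(1)
      by (intro divide_left_mono mult_pos_pos) auto
  qed
  also have "\<dots> = (a / (2 * real L))^2"
    using a2 t L1 by (simp add: power_divide field_simps power2_eq_square)
  finally have "1 / (36 * sqrt (real t * l)) \<le> a / (2 * real L)"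
    by (rule power2_le_imp_le) (use apos in simp)
  then show ?thesis using res unfolding l_def by linarith
qed



theorem corollary1:
  shows "\<exists>c::real. c > 0 \<and>
    (\<forall>(t::nat) (N::nat). 0 < t \<longrightarrow> 0 < N \<longrightarrow>
       real t \<le> real N powr (2 * (exp 4 - 1)) / 36 \<longrightarrow>
       (\<forall>\<rho>. estimator \<rho> \<longrightarrow>
          (SUP R\<in>{R. sq_dist R}. risk t N R \<rho>)
            \<ge> c * max (1 / real t) (1 / sqrt (real t * ln (real N)))))"
proof (intro exI[of _ "1/72"] conjI allI impI)
  show "(0::real) < 1/72" by simp
  fix t N :: nat and \<rho>
  assume t: "0 < t" and N0: "0 < N" and tb: "real t \<le> real N powr (2 * (exp 4 - 1)) / 36"
    and est: "estimator \<rho>"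
  have N: "2 \<le> N"
  proof (rule ccontr)
    assume "\<not> 2 \<le> N"
    then have "N = 1" using N0 by simp
    then have "real t \<le> 1/36" using tb by simp
    then show False using t by simp
  qed
  define l where "l = ln (real N)"
  have lpos: "0 < l" unfolding l_def using N by simp
  have t1: "1 \<le> real t" using t by simp
  show "1/72 * max (1 / real t) (1 / sqrt (real t * ln (real N))) \<le> (SUP R\<in>{R. sq_dist R}. risk t N R \<rho>)"
  proof (cases "real t \<le> 4 * l")
    case True
    have "(real t / 2)^2 \<le> real t * l"
      using True t1 by (simp add: power2_eq_square field_simps mult_left_mono)
    then have "real t / 2 \<le> sqrt (real t * l)" by (rule real_le_rsqrt)
    moreover have sp: "0 < sqrt (real t * l)" using lpos t1 by simp
    ultimately have "1 / sqrt (real t * l) \<le> 1 / (real t / 2)"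
      using t1 by (intro divide_left_mono) auto
    then have "max (1 / real t) (1 / sqrt (real t * l)) \<le> 2 / real t"
      using t1 by (simp add: field_simps)
    then have "1/72 * max (1 / real t) (1 / sqrt (real t * l)) \<le> 1 / (8 * real t)"
      using t1 by (simp add: field_simps)
    then show ?thesis using case_small[OF t est, of N] unfolding l_def by linarith
  next
    case False
    then have big: "4 * ln (real N) < real t" unfolding l_def by simp
    have "real t * l \<le> real t ^ 2" using False lpos t1 by (simp add: power2_eq_square)
    then have "sqrt (real t * l) \<le> real t" using real_sqrt_le_mono by fastforce
    then have "1 / real t \<le> 1 / sqrt (real t * l)"
      using lpos t1 by (intro divide_left_mono) auto
    then have "max (1 / real t) (1 / sqrt (real t * l)) = 1 / sqrt (real t * l)" by simp
    moreover have "1/72 * (1 / sqrt (real t * l)) \<le> 1 / (36 * sqrt (real t * l))"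
      using lpos t1 by (simp add: field_simps)
    ultimately show ?thesis using case_large[OF t N est big] unfolding l_def by linarith
  qed
qed

end
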